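(* Let $n\ge4$, let $(e_i)_{i=0}^n$ be the standard unit vector basis of the Euclidean space $\ell_2^{n+1}$, let $M=\sqrt{(2/\ln 2)\,n\log_2 n}$, and let $$A=\Bigl\{M\sum_{i=1}^n t_ie_i+E_{n-1}(t_1,\dots,t_n)\,e_0:\ (t_1,\dots,t_n)\in\Delta_{n-1}\Bigr\}.$$ Then $A$ is approximately convex, $$\mathcal{H}(A,\operatorname{Co}(A))=\log_2 n,\qquad\text{and}\qquad\operatorname{diam}(A)\le\frac{2}{\sqrt{\ln 2}}\sqrt{n\log_2 n}+\log_2 n .$$
   Context: $\Delta_{n-1}=\{(t_1,\dots,t_n): t_i\ge0,\sum_i t_i=1\}$, and $E_{n-1}(t_1,\dots,t_n)=\sum_{i=1}^n t_i\log_2(1/t_i)$ with $0\log_2(1/0)=0$. A set $A$ is approximately convex if $d(tx+(1-t)y,A)\le1$ for all $x,y\in A$, $t\in[0,1]$, where $d(x,A)=\inf_{a\in A}\|x-a\|$. $\mathcal{H}$ is the Hausdorff distance, $\operatorname{Co}$ the convex hull, $\operatorname{diam}(A)=\sup\{\|x-y\|:x,y\in A\}$. *)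

theory Defs
  imports "HOL-Analysis.Analysis"
begin

definition std_simplex :: "nat \<Rightarrow> (nat \<Rightarrow> real) set" where
  "std_simplex n = {t. (\<forall>i\<in>{1..n}. 0 \<le> t i) \<and> (\<Sum>i=1..n. t i) = 1}"

definition entropy :: "nat \<Rightarrow> (nat \<Rightarrow> real) \<Rightarrow> real" where
  "entropy n t = (\<Sum>i=1..n. if t i = 0 then 0 else t i * log 2 (1 / t i))"

definition approx_convex :: "'a::real_normed_vector set \<Rightarrow> bool" where
  "approx_convex A \<longleftrightarrow>
     (\<forall>x\<in>A. \<forall>y\<in>A. \<forall>t\<in>{0..1::real}. infdist (t *\<^sub>R x + (1 - t) *\<^sub>R y) A \<le> 1)"

text \<open>Hausdorff distance (for nonempty bounded sets).\<close>
definition hausdorff_dist :: "'a::metric_space set \<Rightarrow> 'a set \<Rightarrow> real" where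
  "hausdorff_dist A B = max (SUP a\<in>A. infdist a B) (SUP b\<in>B. infdist b A)"

end

theory Submission
  imports Defs
begin


lemma xlnx_le:
  fixes a m :: real assumes "0 \<le> a" "0 < m"
  shows "a * ln m - a * ln a \<le> m - a"
proof (cases "a = 0")
  case True then show ?thesis using assms by simp
next
  case False
  then have a: "a > 0" using assms by simp
  have "ln (m / a) \<le> m / a - 1" using ln_le_minus_one a assms by simp
  then have "a * ln (m/a) \<le> a * (m/a - 1)" using a by (simp add: mult_left_mono)
  moreover have "ln (m/a) = ln m - ln a" using a assms by (simp add: ln_div)
  ultimately show ?thesis using a by (simp add: algebra_simps)
qed

lemma F1:
  fixes a b l :: real assumes "0 \<le> a" "0 \<le> b" "0 \<le> l" "l \<le> 1"
  shows "(l*a+(1-l)*b) * ln (l*a+(1-l)*b) \<le> l * (a * ln a) + (1-l) * (b * ln b)"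
proof -
  define m where "m = l*a+(1-l)*b"
  have m0: "m \<ge> 0" using assms by (simp add: m_def)
  show ?thesis
  proof (cases "m = 0")
    case True
    then have "l*a = 0" "(1-l)*b = 0" using assms unfolding m_def
      by (smt (verit) mult_nonneg_nonneg)+
    then show ?thesis using True unfolding m_def by auto
  next
    case False
    then have mp: "m > 0" using m0 by simp
    have 1: "l * (a * ln m - a * ln a) \<le> l * (m - a)"
      using xlnx_le[OF assms(1) mp] assms by (simp add: mult_left_mono)
    have 2: "(1-l) * (b * ln m - b * ln b) \<le> (1-l) * (m - b)"
      using xlnx_le[OF assms(2) mp] assms by (simp add: mult_left_mono)
    have "m * ln m = l * (a * ln m) + (1-l) * (b * ln m)" unfolding m_def by (simp add: algebra_simps)
    moreover have "l * (m - a) + (1-l)*(m-b) = 0" unfolding m_def by (simp add: algebra_simps)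
    ultimately show ?thesis using 1 2 unfolding m_def[symmetric] by (simp add: algebra_simps)
  qed
qed

lemma plnp_mono:
  fixes p q :: real assumes "0 \<le> p" "0 \<le> q"
  shows "p * ln p \<le> p * ln (p + q)"
proof (cases "p = 0")
  case False
  then have "ln p \<le> ln (p+q)" using assms by simp
  then show ?thesis using assms by (simp add: mult_left_mono)
qed simp

lemma lnmult0:
  fixes l a :: real assumes "0 \<le> l" "0 \<le> a"
  shows "l * (a * ln a) + l * a * ln l = (l*a) * ln (l*a)"
proof (cases "l = 0 \<or> a = 0")
  case False
  then have "ln (l*a) = ln l + ln a" using assms by (simp add: ln_mult)
  then show ?thesis by (simp add: algebra_simps)
qed auto

lemma F2:
  fixes a b l :: real assumes "0 \<le> a" "0 \<le> b" "0 \<le> l" "l \<le> 1"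
  shows "l * (a * ln a) + (1-l) * (b * ln b) - (l*a+(1-l)*b) * ln (l*a+(1-l)*b)
     \<le> - (l * a * ln l) - ((1-l) * b * ln (1-l))"
proof -
  have e1: "l * (a * ln a) + l * a * ln l = (l*a) * ln (l*a)" using lnmult0 assms by simp
  have e2: "(1-l) * (b * ln b) + (1-l) * b * ln (1-l) = ((1-l)*b) * ln ((1-l)*b)" using lnmult0 assms by simp
  have p: "(l*a) * ln (l*a) \<le> (l*a) * ln (l*a+(1-l)*b)"
    using plnp_mono[of "l*a" "(1-l)*b"] assms by simp
  have q: "((1-l)*b) * ln ((1-l)*b) \<le> ((1-l)*b) * ln (l*a+(1-l)*b)"
    using plnp_mono[of "(1-l)*b" "l*a"] assms by (simp add: add.commute)
  show ?thesis using e1 e2 p q by (simp add: algebra_simps)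
qed

lemma F3:
  fixes l :: real assumes "0 \<le> l" "l \<le> 1"
  shows "- (l * ln l) - (1-l) * ln (1-l) \<le> ln 2"
proof -
  have g: "x * ln (1/(2*x)) \<le> 1/2 - x" if "0 \<le> x" for x :: real
  proof (cases "x = 0")
    case False
    then have x: "x > 0" using that by simp
    have "ln (1/(2*x)) \<le> 1/(2*x) - 1" using ln_le_minus_one x by simp
    then have "x * ln (1/(2*x)) \<le> x * (1/(2*x) - 1)" using x by (simp add: mult_left_mono)
    moreover have "x * (1/(2*x) - 1) = 1/2 - x" using x by (simp add: field_simps)
    ultimately show ?thesis by simp
  qed simp
  have h: "x * ln (1/(2*x)) = - (x * ln x) - x * ln 2" if "0 \<le> x" for x :: real
    using that by (cases "x = 0") (auto simp: ln_div ln_mult algebra_simps)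
  have "l * ln (1/(2*l)) \<le> 1/2 - l" "(1-l) * ln (1/(2*(1-l))) \<le> 1/2 - (1-l)"
    using g[of l] g[of "1-l"] assms by auto
  moreover have "(1-l) * ln (1/(2*(1-l))) = - ((1-l) * ln (1-l)) - (1-l) * ln 2"
    using h[of "1-l"] assms by simp
  moreover have "l * ln (1/(2*l)) = - (l * ln l) - l * ln 2" using h assms by simp
  ultimately show ?thesis by (simp add: algebra_simps)
qed

lemma F4:
  fixes x N :: real assumes "0 \<le> x" "N > 0"
  shows "x - 1/N \<le> x * ln (N * x)"
proof (cases "x = 0")
  case False
  then have x: "x > 0" using assms by simp
  have "ln (1/(N*x)) \<le> 1/(N*x) - 1" using ln_le_minus_one x assms by simp
  moreover have "ln (1/(N*x)) = - ln (N*x)" using x assms by (simp add: ln_div)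
  ultimately have "- ln (N*x) \<le> 1/(N*x) - 1" by simp
  then have "x * (- ln (N*x)) \<le> x * (1/(N*x) - 1)" using x by (intro mult_left_mono) auto
  moreover have "x * (1/(N*x) - 1) = 1/N - x" using x assms by (simp add: field_simps)
  ultimately show ?thesis by simp
qed (use assms in simp)

lemma F5:
  fixes x N :: real assumes "0 \<le> x" "N > 0"
  shows "x * ln (N * x) \<le> N * x^2 - x"
proof (cases "x = 0")
  case False
  then have x: "x > 0" using assms by simp
  have "ln (N*x) \<le> N*x - 1" using ln_le_minus_one x assms by simp
  then have "x * ln (N*x) \<le> x * (N*x - 1)" using x by (simp add: mult_left_mono)
  then show ?thesis by (simp add: algebra_simps power2_eq_square)
qed simp



lemma orth_norm2:
  fixes e :: "nat \<Rightarrow> 'a::real_inner"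
  assumes "\<forall>i\<in>{0..n}. \<forall>j\<in>{0..n}. e i \<bullet> e j = (if i = j then 1 else 0)"
  shows "(norm (\<Sum>i=0..n. c i *\<^sub>R e i))^2 = (\<Sum>i=0..n. (c i)^2)"
proof -
  have "(norm (\<Sum>i=0..n. c i *\<^sub>R e i))^2 = (\<Sum>i=0..n. c i *\<^sub>R e i) \<bullet> (\<Sum>j=0..n. c j *\<^sub>R e j)"
    by (simp add: power2_norm_eq_inner)
  also have "... = (\<Sum>i=0..n. (c i *\<^sub>R e i) \<bullet> (\<Sum>j=0..n. c j *\<^sub>R e j))"
    by (rule inner_sum_left)
  also have "... = (\<Sum>i=0..n. \<Sum>j=0..n. c i * c j * (e i \<bullet> e j))"
    by (simp add: inner_sum_right mult_ac)
  also have "... = (\<Sum>i=0..n. \<Sum>j=0..n. if i = j then c i * c j else 0)"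
    using assms by (intro sum.cong refl) auto
  also have "... = (\<Sum>i=0..n. (c i)^2)" by (simp add: power2_eq_square)
  finally show ?thesis .
qed

lemma sum0split: "(\<Sum>i=0..n. f i) = f 0 + (\<Sum>i=1..(n::nat). f i)"
  by (simp add: sum.atLeast_Suc_atMost)

definition W :: "nat \<Rightarrow> (nat \<Rightarrow> 'a::real_vector) \<Rightarrow> real \<Rightarrow> real \<Rightarrow> (nat \<Rightarrow> real) \<Rightarrow> 'a" where
  "W n e M y s = (\<Sum>i=0..n. (if i=0 then y else M * s i) *\<^sub>R e i)"

lemma rep: "M *\<^sub>R (\<Sum>i=1..n. t i *\<^sub>R e i) + y *\<^sub>R e 0 = W n e M y t"
proof -
  have "W n e M y t = y *\<^sub>R e 0 + (\<Sum>i=1..n. (if i=0 then y else M * t i) *\<^sub>R e i)"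
    unfolding W_def by (subst sum0split) simp
  also have "(\<Sum>i=1..n. (if i=0 then y else M * t i) *\<^sub>R e i) = (\<Sum>i=1..n. M *\<^sub>R (t i *\<^sub>R e i))"
    by (intro sum.cong refl) auto
  finally show ?thesis by (simp add: scaleR_sum_right)
qed

lemma combW: "u *\<^sub>R W n e M y1 s1 + v *\<^sub>R W n e M y2 s2 = W n e M (u * y1 + v * y2) (\<lambda>i. u * s1 i + v * s2 i)"
  unfolding W_def scaleR_sum_right sum.distrib[symmetric]
  by (intro sum.cong refl) (auto simp: algebra_simps)

lemma distW:
  fixes e :: "nat \<Rightarrow> 'a::real_inner"
  assumes "\<forall>i\<in>{0..n}. \<forall>j\<in>{0..n}. e i \<bullet> e j = (if i = j then 1 else 0)"
  shows "(norm (W n e M y s - W n e M y' s'))^2 = (y-y')^2 + M^2 * (\<Sum>i=1..n. (s i - s' i)^2)"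
proof -
  have "W n e M y s - W n e M y' s' = (\<Sum>i=0..n. ((if i=0 then y else M * s i) - (if i=0 then y' else M * s' i)) *\<^sub>R e i)"
    unfolding W_def by (simp add: sum_subtractf[symmetric] scaleR_diff_left)
  then have "(norm (W n e M y s - W n e M y' s'))^2 = (\<Sum>i=0..n. ((if i=0 then y else M * s i) - (if i=0 then y' else M * s' i))^2)"
    using orth_norm2[OF assms] by simp
  also have "... = (y-y')^2 + (\<Sum>i=1..n. ((if i=0 then y else M * s i) - (if i=0 then y' else M * s' i))^2)"
    by (subst sum0split) simp
  also have "(\<Sum>i=1..n. ((if i=0 then y else M * s i) - (if i=0 then y' else M * s' i))^2) = (\<Sum>i=1..n. M^2 * (s i - s' i)^2)"
    by (intro sum.cong refl) (auto simp: power2_eq_square algebra_simps)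
  finally show ?thesis by (simp add: sum_distrib_left)
qed

lemma ent_ln:
  assumes "\<forall>i\<in>{1..n}. 0 \<le> t i"
  shows "entropy n t = - (\<Sum>i=1..n. t i * ln (t i)) / ln 2"
  unfolding entropy_def sum_divide_distrib sum_negf[symmetric]
  by (intro sum.cong refl) (simp add: log_def divide_inverse ln_inverse)

lemma simplex_le1:
  assumes "t \<in> std_simplex n" "i \<in> {1..n}" shows "0 \<le> t i" "t i \<le> 1"
proof -
  show "0 \<le> t i" using assms unfolding std_simplex_def by auto
  have "t i \<le> (\<Sum>i=1..n. t i)" using assms unfolding std_simplex_def
    by (intro member_le_sum) auto
  then show "t i \<le> 1" using assms unfolding std_simplex_def by auto
qed

lemma ent_facts:
  assumes t: "t \<in> std_simplex n" and n: "n \<ge> 1"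
  shows "(\<Sum>i=1..n. t i * ln (t i)) \<le> 0"
    and "0 \<le> ln n + (\<Sum>i=1..n. t i * ln (t i))"
    and "ln n + (\<Sum>i=1..n. t i * ln (t i)) \<le> n * (\<Sum>i=1..n. (t i - 1/n)^2)"
proof -
  have nn: "\<forall>i\<in>{1..n}. 0 \<le> t i" "\<forall>i\<in>{1..n}. t i \<le> 1" using simplex_le1[OF t] by auto
  have s1: "(\<Sum>i=1..n. t i) = 1" using t unfolding std_simplex_def by auto
  show "(\<Sum>i=1..n. t i * ln (t i)) \<le> 0"
  proof (intro sum_nonpos)
    fix i assume i: "i \<in> {1..n}"
    show "t i * ln (t i) \<le> 0"
    proof (cases "t i = 0")
      case False
      have "0 \<le> t i" "t i \<le> 1" using nn i by auto
      then have "0 < t i" "t i \<le> 1" using False by auto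
      then have "ln (t i) \<le> 0" by simp
      then show ?thesis using nn i by (simp add: mult_nonneg_nonpos)
    qed simp
  qed
  have np: "real n > 0" using n by simp
  have eq: "(\<Sum>i=1..n. t i * ln (real n * t i)) = ln n + (\<Sum>i=1..n. t i * ln (t i))"
  proof -
    have "(\<Sum>i=1..n. t i * ln (real n * t i)) = (\<Sum>i=1..n. t i * ln n + t i * ln (t i))"
    proof (intro sum.cong refl)
      fix i assume i: "i \<in> {1..n}"
      show "t i * ln (real n * t i) = t i * ln n + t i * ln (t i)"
        using nn i np by (cases "t i = 0") (auto simp: ln_mult algebra_simps)
    qed
    also have "... = ln n * (\<Sum>i=1..n. t i) + (\<Sum>i=1..n. t i * ln (t i))"
      by (simp add: sum.distrib sum_distrib_left mult.commute)
    finally show ?thesis using s1 by simp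
  qed
  have "(\<Sum>i=1..n. t i - 1/n) \<le> (\<Sum>i=1..n. t i * ln (real n * t i))"
    using F4 nn np by (intro sum_mono) auto
  moreover have "(\<Sum>i=1..n. t i - 1/n) = 0" using s1 np by (simp add: sum_subtractf)
  ultimately show "0 \<le> ln n + (\<Sum>i=1..n. t i * ln (t i))" using eq by simp
  have "(\<Sum>i=1..n. t i * ln (real n * t i)) \<le> (\<Sum>i=1..n. n * (t i)^2 - t i)"
    using F5 nn np by (intro sum_mono) auto
  moreover have "(\<Sum>i=1..n. n * (t i)^2 - t i) = n * (\<Sum>i=1..n. (t i - 1/n)^2)"
  proof -
    have "(\<Sum>i=1..n. (t i - 1/n)^2) = (\<Sum>i=1..n. (t i)^2 - (2/n) * t i + 1/n^2)"
      by (intro sum.cong refl) (simp add: power2_eq_square field_simps)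
    also have "... = (\<Sum>i=1..n. (t i)^2) - (2/n) + n/n^2"
      using s1 by (simp add: sum.distrib sum_subtractf sum_distrib_left[symmetric] sum_divide_distrib[symmetric])
    finally have "(\<Sum>i=1..n. (t i - 1/n)^2) = (\<Sum>i=1..n. (t i)^2) - 1/n"
      using np by (simp add: power2_eq_square field_simps)
    then show ?thesis using s1 np by (simp add: sum_subtractf sum_distrib_left[symmetric] field_simps)
  qed
  ultimately show "ln n + (\<Sum>i=1..n. t i * ln (t i)) \<le> n * (\<Sum>i=1..n. (t i - 1/n)^2)" using eq by simp
qed



theorem theorem5p4:
  fixes n :: nat and e :: "nat \<Rightarrow> 'a::euclidean_space" and M :: real and A :: "'a set"
  assumes n4: "n \<ge> 4"
    and dim: "DIM('a) = n + 1"
    and orthonormal: "\<forall>i\<in>{0..n}. \<forall>j\<in>{0..n}. e i \<bullet> e j = (if i = j then 1 else 0)"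
    and M_def: "M = sqrt ((2 / ln 2) * real n * log 2 (real n))"
    and A_def: "A = (\<lambda>t. M *\<^sub>R (\<Sum>i=1..n. t i *\<^sub>R e i) + entropy n t *\<^sub>R e 0) ` std_simplex n"
  shows "approx_convex A
         \<and> hausdorff_dist A (convex hull A) = log 2 (real n)
         \<and> diameter A \<le> 2 / sqrt (ln 2) * sqrt (real n * log 2 (real n)) + log 2 (real n)"
proof -
  define L where "L = log 2 (real n)"
  define E where "E = entropy n"
  define P where "P t = W n e M (E t) t" for t
  have n1: "n \<ge> 1" and np: "real n > 0" using n4 by auto
  have ln2: "ln (2::real) > 0" by simp
  have L0: "L \<ge> 0" unfolding L_def using n1 by simp
  have LL: "L = ln n / ln 2" unfolding L_def log_def by simp
  have AP: "A = P ` std_simplex n" unfolding A_def P_def E_def using rep by metis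
  have "0 \<le> 2 / ln 2 * n * L" using L0 ln2 by simp
  then have M2: "M^2 = 2 / ln 2 * n * L" unfolding M_def L_def[symmetric] by (metis real_sqrt_pow2)
  have M0: "M \<ge> 0" using M2 \<open>0 \<le> 2 / ln 2 * n * L\<close> unfolding M_def L_def[symmetric] by (metis real_sqrt_ge_zero)
  have Eln: "E t = - (\<Sum>i=1..n. t i * ln (t i)) / ln 2" if "t \<in> std_simplex n" for t
    unfolding E_def using ent_ln simplex_le1[OF that] by blast
  have EB: "0 \<le> E t \<and> E t \<le> L" if t: "t \<in> std_simplex n" for t
    using ent_facts[OF t n1] ln2 unfolding Eln[OF t] LL by (auto simp: field_simps)
  have dP: "(norm (P t - W n e M y s))^2 = (E t - y)^2 + M^2 * (\<Sum>i=1..n. (t i - s i)^2)" for t y s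
    unfolding P_def using distW[OF orthonormal] by blast
  have norm_sq_le: "norm x \<le> b" if "(norm x)^2 \<le> b^2" "b \<ge> 0" for x :: 'a and b
    using that by (meson norm_ge_zero power2_le_imp_le)
  have simpI: "(\<lambda>i. u * s1 i + v * s2 i) \<in> std_simplex n"
    if "s1 \<in> std_simplex n" "s2 \<in> std_simplex n" "u \<ge> 0" "v \<ge> 0" "u + v = 1" for s1 s2 u v
    using that unfolding std_simplex_def
    by (auto simp: sum.distrib sum_distrib_left[symmetric])
  obtain t0 where t0: "t0 \<in> std_simplex n"
  proof
    show "(\<lambda>i. if i = 1 then 1 else 0) \<in> std_simplex n" unfolding std_simplex_def using n1 by auto
  qed
  have Ane: "A \<noteq> {}" using AP t0 by auto

  have AC: "approx_convex A"
    unfolding approx_convex_def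
  proof (intro ballI)
    fix x y and l :: real
    assume "x \<in> A" "y \<in> A" and l: "l \<in> {0..1}"
    then obtain t1 t2 where t1: "t1 \<in> std_simplex n" and t2: "t2 \<in> std_simplex n"
      and xy: "x = P t1" "y = P t2" using AP by auto
    define s where "s = (\<lambda>i. l * t1 i + (1-l) * t2 i)"
    have s: "s \<in> std_simplex n" unfolding s_def using simpI t1 t2 l by auto
    define yc where "yc = l * E t1 + (1-l) * E t2"
    have z: "l *\<^sub>R x + (1 - l) *\<^sub>R y = W n e M yc s"
      unfolding xy P_def yc_def s_def combW ..
    have nz: "(norm (P s - W n e M yc s))^2 = (E s - yc)^2" using dP[of s yc s] by simp
    have nn: "\<forall>i\<in>{1..n}. 0 \<le> t1 i" "\<forall>i\<in>{1..n}. 0 \<le> t2 i" using simplex_le1 t1 t2 by auto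
    have s1: "(\<Sum>i=1..n. t1 i) = 1" "(\<Sum>i=1..n. t2 i) = 1" using t1 t2 unfolding std_simplex_def by auto
    define G where "G = l * (\<Sum>i=1..n. t1 i * ln (t1 i)) + (1-l) * (\<Sum>i=1..n. t2 i * ln (t2 i))
       - (\<Sum>i=1..n. s i * ln (s i))"
    have EG: "E s - yc = G / ln 2" unfolding G_def yc_def Eln[OF s] Eln[OF t1] Eln[OF t2]
      by (simp add: field_simps)
    have G0: "0 \<le> G"
    proof -
      have "(\<Sum>i=1..n. s i * ln (s i)) \<le> (\<Sum>i=1..n. l * (t1 i * ln (t1 i)) + (1-l) * (t2 i * ln (t2 i)))"
        unfolding s_def using F1 nn l by (intro sum_mono) auto
      then show ?thesis unfolding G_def by (simp add: sum.distrib sum_distrib_left)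
    qed
    have G1: "G \<le> ln 2"
    proof -
      have "(\<Sum>i=1..n. l * (t1 i * ln (t1 i)) + (1-l) * (t2 i * ln (t2 i)) - s i * ln (s i))
          \<le> (\<Sum>i=1..n. - (l * t1 i * ln l) - ((1-l) * t2 i * ln (1-l)))"
        unfolding s_def using F2 nn l by (intro sum_mono) auto
      also have "... = - (l * ln l) - (1-l) * ln (1-l)"
        using s1 by (simp add: sum_subtractf sum_negf sum_distrib_left[symmetric] sum_distrib_right[symmetric] mult_ac)
      also have "... \<le> ln 2" using F3 l by auto
      finally show ?thesis unfolding G_def by (simp add: sum.distrib sum_distrib_left sum_subtractf)
    qed
    have "\<bar>E s - yc\<bar> \<le> 1" unfolding EG using G0 G1 ln2 by (simp add: field_simps)
    then have "\<bar>E s - yc\<bar>^2 \<le> 1^2" by (intro power_mono) auto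
    then have nsq: "(norm (P s - W n e M yc s))^2 \<le> 1^2" unfolding nz by simp
    have "norm (P s - W n e M yc s) \<le> 1"
      using norm_sq_le[OF nsq] by simp
    moreover have "P s \<in> A" using AP s by auto
    ultimately show "infdist (l *\<^sub>R x + (1 - l) *\<^sub>R y) A \<le> 1"
      unfolding z by (intro infdist_le2[of "P s"]) (auto simp: dist_norm norm_minus_commute)
  qed
  define R where "R = 2 / sqrt (ln 2) * sqrt (real n * L)"
  have R0: "R \<ge> 0" using L0 by (simp add: R_def)
  have R2: "R^2 = 2 * M^2"
  proof -
    have "R^2 = (2 / sqrt (ln 2))^2 * (sqrt (real n * L))^2" unfolding R_def by (rule power_mult_distrib)
    also have "... = 4 / ln 2 * (real n * L)" using L0 ln2 by (simp add: power_divide)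
    finally show ?thesis using M2 by simp
  qed
  have DIAM: "diameter A \<le> R + L"
  proof (rule diameter_le)
    show "A \<noteq> {} \<or> 0 \<le> R + L" using Ane by simp
    fix x y assume "x \<in> A" "y \<in> A"
    then obtain t s where t: "t \<in> std_simplex n" and s: "s \<in> std_simplex n"
      and xy: "x = P t" "y = P s" using AP by auto
    have nd: "(norm (x - y))^2 = (E t - E s)^2 + M^2 * (\<Sum>i=1..n. (t i - s i)^2)"
      unfolding xy using dP[of t "E s" s] unfolding P_def by simp
    have "\<bar>E t - E s\<bar> \<le> L" using EB[OF t] EB[OF s] by auto
    then have "\<bar>E t - E s\<bar>^2 \<le> L^2" by (intro power_mono) auto
    then have e1: "(E t - E s)^2 \<le> L^2" by simp
    have "(\<Sum>i=1..n. (t i - s i)^2) \<le> (\<Sum>i=1..n. t i + s i)"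
    proof (intro sum_mono)
      fix i assume i: "i \<in> {1..n}"
      have a: "0 \<le> t i" "t i \<le> 1" "0 \<le> s i" "s i \<le> 1" using simplex_le1 t s i by auto
      have "t i * t i \<le> t i" "s i * s i \<le> s i" using a by (auto intro: mult_left_le)
      moreover have "0 \<le> t i * s i" using a by simp
      ultimately show "(t i - s i)^2 \<le> t i + s i" by (simp add: power2_eq_square algebra_simps)
    qed
    also have "... = 2" using t s unfolding std_simplex_def by (simp add: sum.distrib)
    finally have m2: "M^2 * (\<Sum>i=1..n. (t i - s i)^2) \<le> M^2 * 2" by (intro mult_left_mono) auto
    have "(norm (x - y))^2 \<le> L^2 + R^2" using nd e1 m2 R2 by linarith
    also have "... \<le> (R + L)^2" using R0 L0 by (simp add: power2_sum)
    finally have "(norm (x - y))^2 \<le> (R + L)^2" .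
    then show "norm (x - y) \<le> R + L" using norm_sq_le R0 L0 by simp
  qed

  define H where "H = convex hull A"
  define SS where "SS = {W n e M y s | y s. s \<in> std_simplex n \<and> 0 \<le> y \<and> y \<le> L}"
  have cSS: "convex SS" unfolding convex_def
  proof (intro ballI allI impI)
    fix x z and u v :: real assume "x \<in> SS" "z \<in> SS" and uv: "0 \<le> u" "0 \<le> v" "u + v = 1"
    then obtain y1 s1 y2 s2 where x: "x = W n e M y1 s1" "s1 \<in> std_simplex n" "0 \<le> y1" "y1 \<le> L"
      and z: "z = W n e M y2 s2" "s2 \<in> std_simplex n" "0 \<le> y2" "y2 \<le> L"
      unfolding SS_def by auto
    have "u * y1 + v * y2 \<le> u * L + v * L" using x z uv by (intro add_mono mult_left_mono) auto
    then have "u * y1 + v * y2 \<le> L" using uv by (simp add: distrib_right[symmetric])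
    moreover have "0 \<le> u * y1 + v * y2" using x z uv by simp
    ultimately show "u *\<^sub>R x + v *\<^sub>R z \<in> SS"
      unfolding x z combW SS_def using simpI[OF x(2) z(2) uv] by blast
  qed
  have ASS: "A \<subseteq> SS" using AP EB unfolding SS_def P_def by auto
  have HS: "H \<subseteq> SS" unfolding H_def using hull_minimal[OF ASS, of convex] cSS by simp
  have AH: "A \<subseteq> H" unfolding H_def by (rule hull_subset)
  have up: "infdist b A \<le> L" if bH: "b \<in> H" for b
  proof -
    obtain y s where b: "b = W n e M y s" "s \<in> std_simplex n" "0 \<le> y" "y \<le> L"
      using bH HS unfolding SS_def by auto
    have "(norm (P s - b))^2 = (E s - y)^2" unfolding b using dP[of s y s] by simp
    also have "... = \<bar>E s - y\<bar>^2" by simp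
    also have "... \<le> L^2" using EB[OF b(2)] b by (intro power_mono) auto
    finally have "norm (P s - b) \<le> L" using norm_sq_le L0 by simp
    moreover have "P s \<in> A" using AP b by auto
    ultimately show ?thesis by (intro infdist_le2[of "P s"]) (auto simp: dist_norm norm_minus_commute)
  qed
  define \<delta> where "\<delta> j = (\<lambda>i. if i = j then 1 else (0::real))" for j :: nat
  define c where "c = W n e M 0 (\<lambda>i. 1 / real n)"
  have cH: "c \<in> H"
  proof -
    have Pd: "P (\<delta> j) = M *\<^sub>R e j" if j: "j \<in> {1..n}" for j
    proof -
      have "E (\<delta> j) = 0" unfolding E_def entropy_def \<delta>_def by (intro sum.neutral) auto
      moreover have "(\<Sum>i=1..n. \<delta> j i *\<^sub>R e i) = (\<Sum>i=1..n. if i = j then e i else 0)"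
        unfolding \<delta>_def by (intro sum.cong) auto
      ultimately show ?thesis using j unfolding P_def rep[symmetric] by simp
    qed
    have dS: "\<delta> j \<in> std_simplex n" if j: "j \<in> {1..n}" for j
      using j unfolding std_simplex_def \<delta>_def by auto
    have "c = M *\<^sub>R (\<Sum>i=1..n. (1 / real n) *\<^sub>R e i) + 0 *\<^sub>R e 0" unfolding c_def by (rule rep[symmetric])
    also have "... = (\<Sum>j=1..n. (1 / real n) *\<^sub>R P (\<delta> j))"
      by (simp add: Pd scaleR_sum_right)
    finally have ceq: "c = (\<Sum>j=1..n. (1 / real n) *\<^sub>R P (\<delta> j))" .
    show ?thesis unfolding ceq H_def
    proof (rule convex_sum)
      show "(\<Sum>i=1..n. 1 / real n) = 1" using np by simp
      show "P (\<delta> i) \<in> convex hull A" if "i \<in> {1..n}" for i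
        using dS[OF that] AP AH H_def by auto
    qed auto
  qed
  have low: "L \<le> infdist c A"
    unfolding infdist_def using Ane
  proof (simp, intro cINF_greatest)
    show "A \<noteq> {}" by fact
    fix a assume "a \<in> A"
    then obtain t where t: "t \<in> std_simplex n" and a: "a = P t" using AP by auto
    define Q where "Q = (\<Sum>i=1..n. (t i - 1/n)^2)"
    define D where "D = ln n + (\<Sum>i=1..n. t i * ln (t i))"
    have nd: "(norm (P t - c))^2 = (E t)^2 + M^2 * Q"
      unfolding c_def Q_def using dP[of t 0 "\<lambda>i. 1 / real n"] by simp
    have D0: "0 \<le> D" and DQ: "D \<le> n * Q" using ent_facts[OF t n1] unfolding D_def Q_def by auto
    have d1: "L - E t = D / ln 2" unfolding Eln[OF t] LL D_def by (simp add: field_simps)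
    have d2: "(L - E t) * (L + E t) \<le> (L - E t) * (2 * L)"
      using EB[OF t] by (intro mult_left_mono) auto
    have "D / ln 2 \<le> n * Q / ln 2" using DQ ln2 by (simp add: divide_right_mono)
    then have d3: "(L - E t) * (2 * L) \<le> (n * Q / ln 2) * (2 * L)"
      unfolding d1 using L0 by (intro mult_right_mono) auto
    have d4: "(n * Q / ln 2) * (2 * L) = M^2 * Q" unfolding M2 by (simp add: field_simps)
    have "L^2 - (E t)^2 = (L - E t) * (L + E t)" by (simp add: power2_eq_square algebra_simps)
    then have "L^2 \<le> (norm (P t - c))^2" using d2 d3 d4 nd by simp
    then have "L \<le> norm (P t - c)" by (rule power2_le_imp_le) simp
    then show "L \<le> dist c a" unfolding a by (simp add: dist_norm norm_minus_commute)
  qed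
  have Hne: "H \<noteq> {}" using cH by auto
  have S1: "(SUP b\<in>H. infdist b A) = L"
  proof (rule antisym)
    show "(SUP b\<in>H. infdist b A) \<le> L" using Hne up by (intro cSUP_least) auto
    have "bdd_above ((\<lambda>b. infdist b A) ` H)" using up by (intro bdd_aboveI2) auto
    then have "infdist c A \<le> (SUP b\<in>H. infdist b A)" using cH by (intro cSUP_upper)
    then show "L \<le> (SUP b\<in>H. infdist b A)" using low by simp
  qed
  have S2: "(SUP a\<in>A. infdist a H) = 0"
  proof -
    have "(SUP a\<in>A. infdist a H) = (SUP a\<in>A. (0::real))"
      using AH by (intro SUP_cong) auto
    then show ?thesis using Ane by simp
  qed
  have HD: "hausdorff_dist A (convex hull A) = L"
    unfolding hausdorff_dist_def H_def[symmetric] S1 S2 using L0 by simp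
  show ?thesis using AC HD DIAM unfolding R_def L_def by (simp add: add.commute)
qed

end
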